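(* For every positive integer $d$ there exists $c>0$ such that the following holds. Let $G$ be the intersection graph of $n\geq 2$ open axis-parallel boxes in $\mathbb{R}^d$, and let $H$ be a comparability graph on $V(G)$. If $G\cap H$ contains no clique of size $s$, then $\chi(G\cap H)\leq c\,s(\log n)^{d}$.
   Context: An open axis-parallel box in $\mathbb{R}^d$ is a set $\{x\in\mathbb{R}^d: a_i<x_i<b_i \ \forall i\in[d]\}$. The intersection graph of a family of boxes has the boxes as vertices, two being adjacent iff they intersect. A comparability graph is a graph $H$ for which there is a partial order $\prec$ on $V(H)$ such that $\{x,y\}\in E(H)$ iff $x\prec y$ or $y\prec x$. For graphs $G,H$ on the same vertex set, $G\cap H$ is the graph on that vertex set with edge set $E(G)\cap E(H)$. $\chi$ denotes chromatic number. *)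

theory Defs
  imports "HOL-Analysis.Analysis"
begin

definition comparability_graph :: "'v set \<Rightarrow> ('v \<Rightarrow> 'v \<Rightarrow> bool) \<Rightarrow> bool" where
  "comparability_graph V E \<longleftrightarrow>
     (\<exists>r. partial_order_on V r \<and>
          (\<forall>x\<in>V. \<forall>y\<in>V. E x y \<longleftrightarrow> x \<noteq> y \<and> ((x, y) \<in> r \<or> (y, x) \<in> r)))"

definition intersection_graph :: "('v \<Rightarrow> 'a set) \<Rightarrow> 'v \<Rightarrow> 'v \<Rightarrow> bool" where
  "intersection_graph B u v \<longleftrightarrow> u \<noteq> v \<and> B u \<inter> B v \<noteq> {}"

definition graph_inter :: "('v \<Rightarrow> 'v \<Rightarrow> bool) \<Rightarrow> ('v \<Rightarrow> 'v \<Rightarrow> bool) \<Rightarrow> 'v \<Rightarrow> 'v \<Rightarrow> bool" where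
  "graph_inter E F u v \<longleftrightarrow> E u v \<and> F u v"

definition has_clique :: "'v set \<Rightarrow> ('v \<Rightarrow> 'v \<Rightarrow> bool) \<Rightarrow> nat \<Rightarrow> bool" where
  "has_clique V E s \<longleftrightarrow>
     (\<exists>K. K \<subseteq> V \<and> finite K \<and> card K = s \<and> (\<forall>u\<in>K. \<forall>v\<in>K. u \<noteq> v \<longrightarrow> E u v))"

definition proper_colouring :: "'v set \<Rightarrow> ('v \<Rightarrow> 'v \<Rightarrow> bool) \<Rightarrow> nat \<Rightarrow> ('v \<Rightarrow> nat) \<Rightarrow> bool" where
  "proper_colouring V E k f \<longleftrightarrow>
     (\<forall>v\<in>V. f v < k) \<and> (\<forall>u\<in>V. \<forall>v\<in>V. E u v \<longrightarrow> f u \<noteq> f v)"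

definition chromatic_number :: "'v set \<Rightarrow> ('v \<Rightarrow> 'v \<Rightarrow> bool) \<Rightarrow> nat" where
  "chromatic_number V E = (LEAST k. \<exists>f. proper_colouring V E k f)"

end

theory Submission
  imports Defs
begin

lemma split_point:
  fixes a b :: "nat \<Rightarrow> real"
  assumes fin: "finite V" and ne: "V \<noteq> {}" and ab: "\<forall>v\<in>V. a v < b v"
  shows "\<exists>t. 2 * card {v\<in>V. b v \<le> t} \<le> card V \<and> 2 * card {v\<in>V. t \<le> a v} \<le> card V"
proof -
  define L where "L x = {v\<in>V. b v \<le> x}" for x
  define S where "S = {x \<in> b ` V. 2 * card (L x) > card V}"
  have finS: "finite S" using fin unfolding S_def by auto
  have "Max (b ` V) \<in> S"
  proof -
    have "L (Max (b ` V)) = V" using fin unfolding L_def by auto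
    moreover have "card V > 0" using fin ne by auto
    ultimately show ?thesis unfolding S_def using fin ne by auto
  qed
  hence Sne: "S \<noteq> {}" by auto
  define ts where "ts = Min S"
  have tsS: "ts \<in> S" using finS Sne ts_def by auto
  define P where "P = {e \<in> a ` V \<union> b ` V. e < ts} \<union> {ts - 1}"
  have finP: "finite P" using fin unfolding P_def by auto
  define m where "m = Max P"
  have mP: "m \<in> P" using finP unfolding m_def P_def by (intro Max_in) auto
  hence mts: "m < ts" unfolding P_def by auto
  define t where "t = (m + ts) / 2"
  have tts: "t < ts" using mts unfolding t_def by auto
  have key: "e \<le> t \<longleftrightarrow> e < ts" if "e \<in> a ` V \<union> b ` V" for e
  proof
    assume "e < ts"
    hence "e \<in> P" using that unfolding P_def by auto
    hence "e \<le> m" using finP unfolding m_def by auto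
    thus "e \<le> t" using mts unfolding t_def by auto
  next
    assume "e \<le> t" thus "e < ts" using tts by auto
  qed
  have key2: "e < t \<longleftrightarrow> e < ts" if "e \<in> a ` V \<union> b ` V" for e
  proof
    assume "e < ts"
    hence "e \<in> P" using that unfolding P_def by auto
    hence "e \<le> m" using finP unfolding m_def by auto
    thus "e < t" using mts unfolding t_def by auto
  next
    assume "e < t" thus "e < ts" using tts by auto
  qed
  have Leq: "{v\<in>V. b v \<le> t} = {v\<in>V. b v < ts}" using key by auto
  have Req: "{v\<in>V. t \<le> a v} = {v\<in>V. ts \<le> a v}" using key2 by (force simp: not_less[symmetric])
  have c1: "2 * card {v\<in>V. b v < ts} \<le> card V"
  proof (cases "{v\<in>V. b v < ts} = {}")
    case True thus ?thesis by (simp only: True card.empty)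
  next
    case False
    define x where "x = Max (b ` {v\<in>V. b v < ts})"
    have fx: "finite (b ` {v\<in>V. b v < ts})" using fin by auto
    have xin: "x \<in> b ` {v\<in>V. b v < ts}" unfolding x_def using fx False by (intro Max_in) auto
    hence xts: "x < ts" and xb: "x \<in> b ` V" by auto
    have Lx: "L x = {v\<in>V. b v < ts}"
      unfolding L_def using xts fx x_def by (auto intro: Max_ge)
    have "x \<notin> S"
    proof
      assume "x \<in> S" hence "ts \<le> x" unfolding ts_def using finS by auto
      thus False using xts by auto
    qed
    thus ?thesis using xb Lx unfolding S_def by auto
  qed
  have c2: "2 * card {v\<in>V. ts \<le> a v} \<le> card V"
  proof -
    have "2 * card (L ts) > card V" using tsS unfolding S_def by auto
    moreover have "{v\<in>V. ts \<le> a v} \<inter> L ts = {}" using ab unfolding L_def by force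
    hence "card {v\<in>V. ts \<le> a v} + card (L ts) = card ({v\<in>V. ts \<le> a v} \<union> L ts)"
      using fin unfolding L_def by (intro card_Un_disjoint[symmetric]) auto
    moreover have "card ({v\<in>V. ts \<le> a v} \<union> L ts) \<le> card V"
      using fin unfolding L_def by (intro card_mono) auto
    ultimately show ?thesis by linarith
  qed
  show ?thesis by (rule exI[of _ t]) (simp only: Leq Req c1 c2)
qed

lemma chain_colour:
  fixes r :: "nat rel"
  assumes fin: "finite V" and VW: "V \<subseteq> W" and po: "partial_order_on W r"
    and clq: "\<forall>C. C \<subseteq> V \<longrightarrow> (\<forall>u\<in>C. \<forall>v\<in>C. (u,v)\<in>r \<or> (v,u)\<in>r) \<longrightarrow> card C < s"
  shows "\<exists>f. (\<forall>v\<in>V. f v < s - 1) \<and> (\<forall>u\<in>V. \<forall>v\<in>V. u\<noteq>v \<longrightarrow> (u,v)\<in>r \<longrightarrow> f u \<noteq> f v)"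
proof -
  have refl: "\<And>x. x \<in> W \<Longrightarrow> (x,x) \<in> r" using partial_order_onD(1)[OF po] unfolding refl_on_def by auto
  have tr: "trans r" and an: "antisym r" using partial_order_onD[OF po] by auto
  define Ch where "Ch v = {C. C \<subseteq> V \<and> (\<forall>x\<in>C. \<forall>y\<in>C. (x,y)\<in>r \<or> (y,x)\<in>r) \<and> v \<in> C \<and> (\<forall>c\<in>C. (c,v)\<in>r)}" for v
  define h where "h v = Max (card ` Ch v)" for v
  have "Ch v \<subseteq> Pow V" for v unfolding Ch_def by blast
  hence finCh: "finite (card ` Ch v)" for v using fin by (meson finite_Pow_iff finite_imageI finite_subset)
  have sing: "{v} \<in> Ch v" if "v \<in> V" for v using that VW refl unfolding Ch_def by auto
  have hge: "card C \<le> h v" if "C \<in> Ch v" for C v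
    unfolding h_def using finCh that by auto
  have hin: "\<exists>C\<in>Ch v. card C = h v" if "v \<in> V" for v
  proof -
    have "h v \<in> card ` Ch v" unfolding h_def using finCh sing[OF that] by (intro Max_in) auto
    thus ?thesis by auto
  qed
  have h1: "1 \<le> h v" if "v \<in> V" for v using hge[OF sing[OF that]] by simp
  have hs: "h v < s" if vV: "v \<in> V" for v
  proof -
    obtain C where C: "C \<in> Ch v" "card C = h v" using hin[OF vV] by auto
    have "C \<subseteq> V" "\<forall>x\<in>C. \<forall>y\<in>C. (x,y)\<in>r \<or> (y,x)\<in>r" using C(1) unfolding Ch_def by auto
    hence "card C < s" by (intro clq[rule_format]) auto
    thus ?thesis using C(2) by simp
  qed
  have hlt: "h u < h v" if uv: "u \<in> V" "v \<in> V" "u \<noteq> v" "(u,v) \<in> r" for u v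
  proof -
    obtain C where C: "C \<in> Ch u" "card C = h u" using hin[OF uv(1)] by auto
    have vC: "v \<notin> C"
    proof
      assume "v \<in> C" hence "(v,u) \<in> r" using C unfolding Ch_def by auto
      thus False using an uv unfolding antisym_def by auto
    qed
    have Cs: "C \<subseteq> V" "\<forall>x\<in>C. \<forall>y\<in>C. (x,y)\<in>r \<or> (y,x)\<in>r" "\<forall>c\<in>C. (c,u)\<in>r"
      using C(1) unfolding Ch_def by auto
    have cv: "\<forall>c\<in>C. (c,v)\<in>r" using Cs(3) uv(4) tr unfolding trans_def by blast
    have "(v,v) \<in> r" using refl VW uv(2) by auto
    hence "insert v C \<in> Ch v"
      using Cs cv uv(2) unfolding Ch_def by auto
    hence "card (insert v C) \<le> h v" by (rule hge)
    moreover have "finite C" using C(1) fin unfolding Ch_def by (auto intro: finite_subset)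
    ultimately show ?thesis using vC C(2) by simp
  qed
  show ?thesis
  proof (rule exI[of _ "\<lambda>v. h v - 1"], intro conjI ballI impI)
    fix v assume "v \<in> V" thus "h v - 1 < s - 1" using h1 hs by (meson diff_less_mono le_trans less_imp_le_nat)
  next
    fix u v assume "u \<in> V" "v \<in> V" "u \<noteq> v" "(u,v) \<in> r"
    thus "h u - 1 \<noteq> h v - 1" using h1[of u] h1[of v] hlt[of u v] by linarith
  qed
qed

lemma pow_ineq: "(m+1)^(Suc j) + (m+2)^j \<le> ((m::nat)+2)^(Suc j)"
proof -
  have "(m+1)^j \<le> (m+2)^j" by (intro power_mono) auto
  hence a: "(m+1)*(m+1)^j \<le> (m+1)*(m+2)^j" by (rule mult_left_mono) simp
  have b: "(m+2)^Suc j = (m+1)*(m+2)^j + (m+2)^j" by simp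
  have c: "(m+1)^Suc j = (m+1)*(m+1)^j" by simp
  show ?thesis unfolding b c using a by linarith
qed

lemma main_colour:
  fixes A B :: "'d \<Rightarrow> nat \<Rightarrow> real" and E :: "nat \<Rightarrow> nat \<Rightarrow> bool" and r :: "nat rel"
  assumes Eov: "\<And>u v k. E u v \<Longrightarrow> max (A k u) (A k v) < min (B k u) (B k v)"
    and Ecomp: "\<And>u v. u \<in> W \<Longrightarrow> v \<in> W \<Longrightarrow> E u v \<Longrightarrow> u \<noteq> v \<and> ((u,v)\<in>r \<or> (v,u)\<in>r)"
    and Ebase: "\<And>u v. u \<in> W \<Longrightarrow> v \<in> W \<Longrightarrow> u \<noteq> v \<Longrightarrow> (u,v)\<in>r \<or> (v,u)\<in>r \<Longrightarrow>
                  (\<forall>k. max (A k u) (A k v) < min (B k u) (B k v)) \<Longrightarrow> E u v"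
    and po: "partial_order_on W r"
    and noclq: "\<not> has_clique W E s"
    and s2: "s \<ge> 2"
    and finJ: "finite J"
  shows "\<And>V m. finite V \<Longrightarrow> V \<subseteq> W \<Longrightarrow> card V \<le> 2^m \<Longrightarrow>
     (\<forall>u\<in>V. \<forall>v\<in>V. u \<noteq> v \<longrightarrow> (\<forall>k. k \<notin> J \<longrightarrow> max (A k u) (A k v) < min (B k u) (B k v))) \<Longrightarrow>
     \<exists>f. proper_colouring V E ((s-1)*(m+1)^card J) f"
  using finJ
proof (induction J rule: finite_induct)
  case empty
  fix V :: "nat set" and m :: nat
  assume fin: "finite V" and VW: "V \<subseteq> W" and
    P: "\<forall>u\<in>V. \<forall>v\<in>V. u \<noteq> v \<longrightarrow> (\<forall>k. k \<notin> {} \<longrightarrow> max (A k u) (A k v) < min (B k u) (B k v))"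
  have clq: "\<forall>C. C \<subseteq> V \<longrightarrow> (\<forall>u\<in>C. \<forall>v\<in>C. (u,v)\<in>r \<or> (v,u)\<in>r) \<longrightarrow> card C < s"
  proof (intro allI impI)
    fix C assume CV: "C \<subseteq> V" and ch: "\<forall>u\<in>C. \<forall>v\<in>C. (u,v)\<in>r \<or> (v,u)\<in>r"
    show "card C < s"
    proof (rule ccontr)
      assume "\<not> card C < s"
      hence "s \<le> card C" by simp
      then obtain K where K: "K \<subseteq> C" "card K = s" and finK: "finite K" by (rule obtain_subset_with_card_n)
      have "\<forall>u\<in>K. \<forall>v\<in>K. u \<noteq> v \<longrightarrow> E u v"
      proof (intro ballI impI)
        fix u v assume "u \<in> K" "v \<in> K" "u \<noteq> v"
        hence uvV: "u \<in> V" "v \<in> V" using K(1) CV by auto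
        have ov: "\<forall>k. max (A k u) (A k v) < min (B k u) (B k v)"
          using P uvV \<open>u \<noteq> v\<close> by simp
        have cmp: "(u,v)\<in>r \<or> (v,u)\<in>r" using ch \<open>u \<in> K\<close> \<open>v \<in> K\<close> K(1) by auto
        show "E u v" by (rule Ebase[OF _ _ \<open>u \<noteq> v\<close> cmp ov]) (use uvV VW in auto)
      qed
      moreover have "K \<subseteq> W" using K(1) CV VW by auto
      ultimately have "has_clique W E s" unfolding has_clique_def using K(2) finK by blast
      thus False using noclq by simp
    qed
  qed
  from chain_colour[OF fin VW po clq] obtain f where
    f: "\<forall>v\<in>V. f v < s - 1" "\<forall>u\<in>V. \<forall>v\<in>V. u\<noteq>v \<longrightarrow> (u,v)\<in>r \<longrightarrow> f u \<noteq> f v"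
    by blast
  have "proper_colouring V E ((s-1)*(m+1)^card ({}::'d set)) f"
    unfolding proper_colouring_def
  proof (intro conjI ballI impI)
    fix v assume "v \<in> V" thus "f v < (s-1)*(m+1)^card ({}::'d set)" using f(1) by simp
  next
    fix u v assume uv: "u \<in> V" "v \<in> V" "E u v"
    have "u \<in> W" "v \<in> W" using uv VW by auto
    hence c: "u \<noteq> v \<and> ((u,v)\<in>r \<or> (v,u)\<in>r)" using Ecomp uv(3) by blast
    show "f u \<noteq> f v"
    proof (cases "(u,v)\<in>r")
      case True thus ?thesis using f(2) uv c by blast
    next
      case False hence "(v,u)\<in>r" using c by blast
      thus ?thesis using f(2) uv c by fastforce
    qed
  qed
  thus "\<exists>f. proper_colouring V E ((s-1)*(m+1)^card ({}::'d set)) f" by blast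
next
  case (insert k J)
  have cJ: "card (insert k J) = Suc (card J)" using insert.hyps by simp
  have s1: "s - 1 \<ge> 1" using s2 by simp
  have gen: "\<forall>V. finite V \<longrightarrow> V \<subseteq> W \<longrightarrow> card V \<le> 2^m \<longrightarrow>
     (\<forall>u\<in>V. \<forall>v\<in>V. u \<noteq> v \<longrightarrow> (\<forall>k'. k' \<notin> insert k J \<longrightarrow> max (A k' u) (A k' v) < min (B k' u) (B k' v))) \<longrightarrow>
     (\<exists>f. proper_colouring V E ((s-1)*(m+1)^card (insert k J)) f)" for m
  proof (induction m)
    case 0
    show ?case
    proof (intro allI impI)
      fix V :: "nat set" assume fin: "finite V" and VW: "V \<subseteq> W" and c: "card V \<le> 2^0"
      have one: "\<forall>a1\<in>V. \<forall>a2\<in>V. a1 = a2" using c card_le_Suc0_iff_eq[OF fin] by simp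
      have "proper_colouring V E ((s-1)*(0+1)^card (insert k J)) (\<lambda>_. 0)"
        unfolding proper_colouring_def
      proof (intro conjI ballI impI)
        fix v show "(0::nat) < (s-1)*(0+1)^card (insert k J)" using s1 by simp
      next
        fix u v assume uv: "u \<in> V" "v \<in> V" "E u v"
        have "u \<noteq> v" using Ecomp[of u v] uv VW by blast
        thus "(0::nat) \<noteq> 0" using one uv by blast
      qed
      thus "\<exists>f. proper_colouring V E ((s-1)*(0+1)^card (insert k J)) f" by blast
    qed
  next
    case (Suc m)
    show ?case
    proof (intro allI impI)
      fix V :: "nat set" assume fin: "finite V" and VW: "V \<subseteq> W" and cV: "card V \<le> 2^Suc m"
        and P: "\<forall>u\<in>V. \<forall>v\<in>V. u \<noteq> v \<longrightarrow> (\<forall>k'. k' \<notin> insert k J \<longrightarrow> max (A k' u) (A k' v) < min (B k' u) (B k' v))"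
      define K where "K = (s-1)*(Suc m+1)^card (insert k J)"
      have Kpos: "K \<ge> 1" unfolding K_def using s1 by simp
      define V' where "V' = {v\<in>V. A k v < B k v}"
      have finV': "finite V'" "V' \<subseteq> V" using fin unfolding V'_def by auto
      have inV': "u \<in> V'" if "u \<in> V" "E u v" for u v
        using Eov[OF that(2), of k] that(1) unfolding V'_def by auto
      have inV'2: "v \<in> V'" if "v \<in> V" "E u v" for u v
        using Eov[OF that(2), of k] that(1) unfolding V'_def by auto
      show "\<exists>f. proper_colouring V E ((s-1)*(Suc m+1)^card (insert k J)) f"
      proof (cases "V' = {}")
        case True
        have "proper_colouring V E K (\<lambda>_. 0)"
          unfolding proper_colouring_def using Kpos inV' True by auto
        thus ?thesis unfolding K_def by blast
      next
        case False
        obtain t where t: "2 * card {v\<in>V'. B k v \<le> t} \<le> card V'" "2 * card {v\<in>V'. t \<le> A k v} \<le> card V'"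
          using split_point[OF finV'(1) False, of "A k" "B k"] unfolding V'_def by auto
        define L where "L = {v\<in>V'. B k v \<le> t}"
        define R where "R = {v\<in>V'. t \<le> A k v}"
        define M where "M = {v\<in>V'. A k v < t \<and> t < B k v}"
        have cV': "card V' \<le> card V" using finV' fin by (intro card_mono) auto
        have cL: "card L \<le> 2^m" using t(1) cV' cV unfolding L_def by simp
        have cR: "card R \<le> 2^m" using t(2) cV' cV unfolding R_def by simp
        have LV: "L \<subseteq> V" "R \<subseteq> V" "M \<subseteq> V" using finV' unfolding L_def R_def M_def by auto
        have finLRM: "finite L" "finite R" "finite M" using LV fin by (auto intro: finite_subset)
        have PL: "\<forall>u\<in>L. \<forall>v\<in>L. u \<noteq> v \<longrightarrow> (\<forall>k'. k' \<notin> insert k J \<longrightarrow> max (A k' u) (A k' v) < min (B k' u) (B k' v))"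
        proof (intro ballI)
          fix u v assume "u \<in> L" "v \<in> L"
          hence uV: "u \<in> V" and vV: "v \<in> V" using LV by auto
          show "u \<noteq> v \<longrightarrow> (\<forall>k'. k' \<notin> insert k J \<longrightarrow> max (A k' u) (A k' v) < min (B k' u) (B k' v))"
            using bspec[OF bspec[OF P uV] vV] .
        qed
        have PR: "\<forall>u\<in>R. \<forall>v\<in>R. u \<noteq> v \<longrightarrow> (\<forall>k'. k' \<notin> insert k J \<longrightarrow> max (A k' u) (A k' v) < min (B k' u) (B k' v))"
        proof (intro ballI)
          fix u v assume "u \<in> R" "v \<in> R"
          hence uV: "u \<in> V" and vV: "v \<in> V" using LV by auto
          show "u \<noteq> v \<longrightarrow> (\<forall>k'. k' \<notin> insert k J \<longrightarrow> max (A k' u) (A k' v) < min (B k' u) (B k' v))"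
            using bspec[OF bspec[OF P uV] vV] .
        qed
        have PM: "\<forall>u\<in>M. \<forall>v\<in>M. u \<noteq> v \<longrightarrow> (\<forall>k'. k' \<notin> J \<longrightarrow> max (A k' u) (A k' v) < min (B k' u) (B k' v))"
        proof (intro ballI impI allI)
          fix u v k' assume uv: "u \<in> M" "v \<in> M" "u \<noteq> v" "k' \<notin> J"
          show "max (A k' u) (A k' v) < min (B k' u) (B k' v)"
          proof (cases "k' = k")
            case True thus ?thesis using uv unfolding M_def by auto
          next
            case False
            have uvV: "u \<in> V" "v \<in> V" using uv LV by auto
            have "k' \<notin> insert k J" using False uv(4) by simp
            thus ?thesis using P uvV uv(3) by blast
          qed
        qed
        obtain fL where fL: "proper_colouring L E ((s-1)*(m+1)^card (insert k J)) fL"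
          using Suc.IH[THEN spec[of _ L], THEN mp, OF finLRM(1), THEN mp, OF subset_trans[OF LV(1) VW], THEN mp, OF cL, THEN mp, OF PL] by blast
        obtain fR where fR: "proper_colouring R E ((s-1)*(m+1)^card (insert k J)) fR"
          using Suc.IH[THEN spec[of _ R], THEN mp, OF finLRM(2), THEN mp, OF subset_trans[OF LV(2) VW], THEN mp, OF cR, THEN mp, OF PR] by blast
        have cM: "card M \<le> 2^Suc m" using cV card_mono[OF fin LV(3)] by simp
        obtain fM where fM: "proper_colouring M E ((s-1)*(Suc m+1)^card J) fM"
          using insert.IH[OF finLRM(3) subset_trans[OF LV(3) VW] cM PM] by blast
        define K1 where "K1 = (s-1)*(m+1)^card (insert k J)"
        define K2 where "K2 = (s-1)*(Suc m+1)^card J"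
        have K12: "K1 + K2 \<le> K"
        proof -
          have "(m+1)^Suc (card J) + (m+2)^card J \<le> (m+2)^Suc (card J)" by (rule pow_ineq)
          hence "(s-1)*((m+1)^Suc (card J) + (m+2)^card J) \<le> (s-1)*(m+2)^Suc (card J)"
            by (rule mult_left_mono) simp
          thus ?thesis unfolding K1_def K2_def K_def cJ by (simp add: algebra_simps)
        qed
        define g where "g v = (if v \<in> L then fL v else if v \<in> R then fR v else if v \<in> M then K1 + fM v else 0)" for v
        have LR: "L \<inter> R = {}" unfolding L_def R_def V'_def by force
        have LRM: "V' = L \<union> R \<union> M" unfolding L_def R_def M_def by force
        have "proper_colouring V E K g"
          unfolding proper_colouring_def
        proof (intro conjI ballI impI)
          fix v assume vV: "v \<in> V"
          show "g v < K"
          proof (cases "v \<in> L")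
            case True thus ?thesis using fL K12 unfolding g_def proper_colouring_def K1_def by fastforce
          next
            case nL: False
            show ?thesis
            proof (cases "v \<in> R")
              case True thus ?thesis using nL fR K12 unfolding g_def proper_colouring_def K1_def by fastforce
            next
              case nR: False
              show ?thesis
              proof (cases "v \<in> M")
                case True thus ?thesis using nL nR fM K12 unfolding g_def proper_colouring_def K2_def by fastforce
              next
                case False thus ?thesis using nL nR Kpos unfolding g_def by simp
              qed
            qed
          qed
        next
          fix u v assume uv: "u \<in> V" "v \<in> V" "E u v"
          have u': "u \<in> V'" using inV'[OF uv(1) uv(3)] .
          have v': "v \<in> V'" using inV'2[OF uv(2) uv(3)] .
          have ovk: "max (A k u) (A k v) < min (B k u) (B k v)" using Eov[OF uv(3)] .
          have notLR1: "\<not> (u \<in> L \<and> v \<in> R)"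
          proof
            assume "u \<in> L \<and> v \<in> R"
            hence "B k u \<le> t" "t \<le> A k v" unfolding L_def R_def by auto
            moreover have "A k v < B k u" using ovk by simp
            ultimately show False by linarith
          qed
          have notLR2: "\<not> (u \<in> R \<and> v \<in> L)"
          proof
            assume "u \<in> R \<and> v \<in> L"
            hence "B k v \<le> t" "t \<le> A k u" unfolding L_def R_def by auto
            moreover have "A k u < B k v" using ovk by simp
            ultimately show False by linarith
          qed
          have fLp: "fL x \<noteq> fL y" if "x \<in> L" "y \<in> L" "E x y" for x y
            using fL that unfolding proper_colouring_def by blast
          have fRp: "fR x \<noteq> fR y" if "x \<in> R" "y \<in> R" "E x y" for x y
            using fR that unfolding proper_colouring_def by blast
          have fMp: "fM x \<noteq> fM y" if "x \<in> M" "y \<in> M" "E x y" for x y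
            using fM that unfolding proper_colouring_def by blast
          have ltK1: "fL w < K1" if "w \<in> L" for w using fL that unfolding proper_colouring_def K1_def by blast
          have ltK1': "fR w < K1" if "w \<in> R" for w using fR that unfolding proper_colouring_def K1_def by blast
          have gL: "g w = fL w" if "w \<in> L" for w using that unfolding g_def by simp
          have gR: "g w = fR w" if "w \<notin> L" "w \<in> R" for w using that unfolding g_def by simp
          have gM: "g w = K1 + fM w" if "w \<notin> L" "w \<notin> R" "w \<in> M" for w using that unfolding g_def by simp
          have cases3: "w \<in> L \<or> (w \<notin> L \<and> w \<in> R) \<or> (w \<notin> L \<and> w \<notin> R \<and> w \<in> M)" if "w \<in> V'" for w
            using that LRM by blast
          have lowu: "g u < K1" if "u \<in> L \<or> u \<in> R" using that gL gR ltK1 ltK1' by (cases "u \<in> L") auto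
          have lowv: "g v < K1" if "v \<in> L \<or> v \<in> R" using that gL gR ltK1 ltK1' by (cases "v \<in> L") auto
          show "g u \<noteq> g v"
            using cases3[OF u'] cases3[OF v']
          proof (elim disjE conjE)
            assume a: "u \<in> L" "v \<in> L"
            have "fL u \<noteq> fL v" using fLp[OF a uv(3)] .
            thus ?thesis using gL[OF a(1)] gL[OF a(2)] by simp
          next
            assume "u \<in> L" "v \<notin> L" "v \<in> R" thus ?thesis using notLR1 by blast
          next
            assume a: "u \<in> L" "v \<notin> L" "v \<notin> R" "v \<in> M"
            have "g u < K1" using lowu a(1) by blast
            moreover have "g v = K1 + fM v" using gM[OF a(2,3,4)] .
            ultimately show ?thesis by simp
          next
            assume "u \<notin> L" "u \<in> R" "v \<in> L" thus ?thesis using notLR2 by blast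
          next
            assume a: "u \<notin> L" "u \<in> R" "v \<notin> L" "v \<in> R"
            have "fR u \<noteq> fR v" using fRp[OF a(2) a(4) uv(3)] .
            thus ?thesis using gR[OF a(1,2)] gR[OF a(3,4)] by simp
          next
            assume a: "u \<notin> L" "u \<in> R" "v \<notin> L" "v \<notin> R" "v \<in> M"
            have "g u < K1" using lowu a(2) by blast
            moreover have "g v = K1 + fM v" using gM[OF a(3,4,5)] .
            ultimately show ?thesis by simp
          next
            assume a: "u \<notin> L" "u \<notin> R" "u \<in> M" "v \<in> L"
            have "g v < K1" using lowv a(4) by blast
            moreover have "g u = K1 + fM u" using gM[OF a(1,2,3)] .
            ultimately show ?thesis by simp
          next
            assume a: "u \<notin> L" "u \<notin> R" "u \<in> M" "v \<notin> L" "v \<in> R"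
            have "g v < K1" using lowv a(5) by blast
            moreover have "g u = K1 + fM u" using gM[OF a(1,2,3)] .
            ultimately show ?thesis by simp
          next
            assume a: "u \<notin> L" "u \<notin> R" "u \<in> M" "v \<notin> L" "v \<notin> R" "v \<in> M"
            have "fM u \<noteq> fM v" using fMp[OF a(3) a(6) uv(3)] .
            thus ?thesis using gM[OF a(1,2,3)] gM[OF a(4,5,6)] by simp
          qed
        qed
        thus ?thesis unfolding K_def by (rule exI[of _ g])
      qed
    qed
  qed
  show ?case by (rule gen[THEN spec, THEN mp, THEN mp, THEN mp, THEN mp]) (fact insert.prems)+
qed

lemma exists_m:
  assumes "(n::nat) \<ge> 2"
  shows "\<exists>m. n \<le> 2^m \<and> 2^m < 2*n"
proof -
  define m where "m = (LEAST m. n \<le> 2^m)"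
  have ex: "n \<le> 2^n" using less_exp[of n] by simp
  have m1: "n \<le> 2^m" unfolding m_def using ex by (rule LeastI)
  have "m \<noteq> 0" using m1 assms by (cases m) auto
  then obtain m' where mm: "m = Suc m'" by (cases m) auto
  have "\<not> n \<le> 2^m'" using not_less_Least[of m' "\<lambda>m. n \<le> 2^m"] mm m_def by simp
  hence "2^m < 2*n" using mm by simp
  thus ?thesis using m1 by blast
qed

lemma log_bound:
  assumes n2: "(n::nat) \<ge> 2" and m: "2^m < 2*n"
  shows "real m + 1 \<le> 3 / ln 2 * ln (real n)"
proof -
  have l2: "ln (2::real) > 0" by simp
  have "real (2^m) < real (2*n)" using m by linarith
  hence "ln (real (2^m)) < ln (real (2*n))" using n2 by (subst ln_less_cancel_iff) auto
  moreover have "ln (real (2^m)) = real m * ln 2" by (simp add: ln_realpow)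
  moreover have "ln (real (2*n)) = ln 2 + ln (real n)" using n2 by (simp add: ln_mult)
  ultimately have a: "real m * ln 2 < ln 2 + ln (real n)" by simp
  have b: "ln 2 \<le> ln (real n)" using n2 by simp
  have "(real m + 1) * ln 2 \<le> 3 * ln (real n)" using a b by (simp add: algebra_simps)
  thus ?thesis using l2 by (simp add: field_simps)
qed

theorem lemma3p2:
  shows "\<exists>c::real. c > 0 \<and>
    (\<forall>(n::nat) (a::nat \<Rightarrow> real^'d) (b::nat \<Rightarrow> real^'d) (H::nat \<Rightarrow> nat \<Rightarrow> bool) (s::nat).
       n \<ge> 2 \<longrightarrow>
       comparability_graph {..<n} H \<longrightarrow>
       \<not> has_clique {..<n} (graph_inter (intersection_graph (\<lambda>i. box (a i) (b i))) H) s \<longrightarrow>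
       real (chromatic_number {..<n} (graph_inter (intersection_graph (\<lambda>i. box (a i) (b i))) H))
         \<le> c * real s * (ln (real n)) ^ CARD('d))"
proof (rule exI[of _ "(3 / ln 2) ^ CARD('d)"], intro conjI allI impI)
  show "(0::real) < (3 / ln 2) ^ CARD('d)" by simp
next
  fix n :: nat and a b :: "nat \<Rightarrow> real^'d" and H :: "nat \<Rightarrow> nat \<Rightarrow> bool" and s :: nat
  assume n2: "n \<ge> 2" and cg: "comparability_graph {..<n} H"
    and nc: "\<not> has_clique {..<n} (graph_inter (intersection_graph (\<lambda>i. box (a i) (b i))) H) s"
  define W where "W = {..<n}"
  define E where "E = graph_inter (intersection_graph (\<lambda>i. box (a i) (b i))) H"
  define A where "A k u = a u $ k" for k u
  define B where "B k u = b u $ k" for k u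
  obtain r where po: "partial_order_on W r"
    and Hr: "\<forall>x\<in>W. \<forall>y\<in>W. H x y \<longleftrightarrow> x \<noteq> y \<and> ((x, y) \<in> r \<or> (y, x) \<in> r)"
    using cg unfolding comparability_graph_def W_def by blast
  have Eov: "max (A k u) (A k v) < min (B k u) (B k v)" if Euv: "E u v" for u v k
  proof -
    obtain x where x: "x \<in> box (a u) (b u)" "x \<in> box (a v) (b v)"
      using Euv unfolding E_def graph_inter_def intersection_graph_def by blast
    hence x1: "a u$k < x$k" "x$k < b u$k" "a v$k < x$k" "x$k < b v$k" unfolding mem_box_cart by auto
    have "a u$k < b u$k" "a u$k < b v$k" "a v$k < b u$k" "a v$k < b v$k"
      using x1 by (meson less_trans)+
    thus ?thesis unfolding A_def B_def by simp
  qed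
  have Ecomp: "u \<noteq> v \<and> ((u,v)\<in>r \<or> (v,u)\<in>r)" if "u \<in> W" "v \<in> W" "E u v" for u v
  proof -
    have "H u v" using that(3) unfolding E_def graph_inter_def by simp
    thus ?thesis using Hr that(1,2) by blast
  qed
  have Ebase: "E u v" if ebw: "u \<in> W" "v \<in> W" "u \<noteq> v" "(u,v)\<in>r \<or> (v,u)\<in>r"
      "\<forall>k. max (A k u) (A k v) < min (B k u) (B k v)" for u v
  proof -
    have HH: "H u v" using Hr ebw(1-4) by blast
    define x :: "real^'d" where "x = (\<chi> k. (max (A k u) (A k v) + min (B k u) (B k v)) / 2)"
    have "x \<in> box (a u) (b u)" "x \<in> box (a v) (b v)"
    proof -
      have h: "max (A k u) (A k v) < x $ k \<and> x $ k < min (B k u) (B k v)" for k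
      proof -
        have lt: "max (A k u) (A k v) < min (B k u) (B k v)" using ebw(5) by blast
        have xk: "x $ k = (max (A k u) (A k v) + min (B k u) (B k v)) / 2" unfolding x_def by simp
        have mid: "p < (p + q) / 2 \<and> (p + q) / 2 < q" if "p < q" for p q :: real
          using that by simp
        show ?thesis unfolding xk by (rule mid[OF lt])
      qed
      show "x \<in> box (a u) (b u)" unfolding mem_box_cart
        using h unfolding A_def B_def by simp
      show "x \<in> box (a v) (b v)" unfolding mem_box_cart
        using h unfolding A_def B_def by simp
    qed
    thus ?thesis unfolding E_def graph_inter_def intersection_graph_def using HH ebw(3) by blast
  qed
  have s2: "s \<ge> 2"
  proof (rule ccontr)
    assume "\<not> s \<ge> 2"
    hence "s = 0 \<or> s = 1" by auto
    hence "has_clique W E s"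
    proof
      assume "s = 0" thus ?thesis unfolding has_clique_def by (intro exI[of _ "{}"]) auto
    next
      assume "s = 1" thus ?thesis unfolding has_clique_def W_def using n2 by (intro exI[of _ "{0}"]) auto
    qed
    thus False using nc unfolding W_def E_def by simp
  qed
  obtain m where m: "n \<le> 2^m" "2^m < 2*n" using exists_m[OF n2] by blast
  have ncW: "\<not> has_clique W E s" using nc unfolding W_def E_def .
  have "\<exists>f. proper_colouring W E ((s-1)*(m+1)^card (UNIV::'d set)) f"
    by (rule main_colour[where J=UNIV, OF Eov Ecomp Ebase po ncW s2])
       (auto simp: W_def m(1))
  then obtain f where f: "proper_colouring W E ((s-1)*(m+1)^CARD('d)) f" by blast
  have "chromatic_number W E \<le> (s-1)*(m+1)^CARD('d)"
    unfolding chromatic_number_def using f by (intro Least_le) blast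
  hence "real (chromatic_number W E) \<le> real ((s-1)*(m+1)^CARD('d))" by linarith
  also have "\<dots> \<le> real s * (real m + 1)^CARD('d)"
  proof -
    have e: "real ((s-1)*(m+1)^CARD('d)) = real (s-1) * (real m + 1)^CARD('d)" by (simp add: add.commute)
    show ?thesis unfolding e by (rule mult_right_mono) auto
  qed
  also have "\<dots> \<le> real s * (3 / ln 2 * ln (real n))^CARD('d)"
    by (intro mult_left_mono power_mono log_bound[OF n2 m(2)]) auto
  also have "\<dots> = (3 / ln 2) ^ CARD('d) * real s * ln (real n) ^ CARD('d)"
  proof -
    have pw: "(3 / ln 2 * ln (real n))^CARD('d) = (3 / ln 2)^CARD('d) * ln (real n)^CARD('d)"
      by (rule power_mult_distrib)
    show ?thesis unfolding pw by (simp add: mult_ac)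
  qed
  finally have fin: "real (chromatic_number W E) \<le> (3 / ln 2) ^ CARD('d) * real s * ln (real n) ^ CARD('d)" .
  show "real (chromatic_number {..<n} (graph_inter (intersection_graph (\<lambda>i. box (a i) (b i))) H))
         \<le> (3 / ln 2) ^ CARD('d) * real s * ln (real n) ^ CARD('d)"
    using fin by (simp only: W_def E_def)
qed

end
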